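(* For $i\in\{0,1\}$, let $N_i\subseteq W({\rm G}_2)$ be the stabilizer of $\beta_i$ under the action of $W({\rm G}_2)$ on $\Psi^+$, and let $D_i$ be a set of left coset representatives for $N_i$ in $W({\rm G}_2)$. Let $K_0=\{1\}\subseteq N_0$ and let $K_1\subseteq N_1$ be the subgroup generated by $r_0r_1r_0r_1r_0$. Then for every $r\in W({\rm G}_2)$ and $i\in\{0,1\}$ there exist $a\in D_i$ and $b\in K_i$ such that $re_i=ae_ib$ in ${\rm Br}({\rm G}_2)$.
   Context: Let $\delta$ be an indeterminate. ${\rm Br}({\rm G}_2)$ is the $\mathbb{Z}[\delta^{\pm1}]$-algebra generated by $r_0,r_1,e_0,e_1$ subject to the following relations: - $r_0^2=r_1^2=1$; - $r_ie_i=e_ir_i=e_i$ for $i=0,1$; - $e_0^2=\delta^3e_0$ and $e_1^2=\delta e_1$; - $r_0e_1e_0=r_1e_0$ and $e_0e_1r_0=e_0r_1$; - $e_1r_0e_1r_0e_1=e_1$ and $e_1r_0e_1r_0r_1=e_1r_0r_1r_0$; - $e_0r_1e_0=\delta^2e_0$; - $r_1r_0e_1r_0e_1=r_0r_1r_0e_1$; - $(r_1r_0)^6=1$. Let $\Psi$ be a root system of type ${\rm G}_2$ with simple roots $\beta_0$ (short) and $\beta_1$ (long), and positive roots $\Psi^+$. $W({\rm G}_2)$ is generated by the reflections $s_0,s_1$ in $\beta_0,\beta_1$. It acts on $\Psi^+$ by $w\cdot\beta=$ the unique element of $\Psi^+\cap\{\pm w\beta\}$. The subgroup of units of ${\rm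 Br}({\rm G}_2)$ generated by $r_0,r_1$ is isomorphic to $W({\rm G}_2)$ via $r_i\mapsto s_i$. Elements of $W({\rm G}_2)$ are identified with their images in ${\rm Br}({\rm G}_2)$. *)

theory Defs
  imports Main
begin

datatype gen = R0 | R1 | E0 | E1

text \<open>A monomial of the free Z[delta^(+-1)]-algebra on the generators is a word in the
generators together with an exponent of delta (delta is central).  An element of the
free algebra is a finitely supported Z-valued coefficient function on monomials;
the ideal below is generated from finitely supported elements, so all its members are
finitely supported.\<close>
type_synonym mon = "gen list \<times> int"
type_synonym elt = "mon \<Rightarrow> int"

definition mono :: "mon \<Rightarrow> elt" where
  "mono m = (\<lambda>x. if x = m then 1 else 0)"

text \<open>Left multiplication by the monomial (w,k): (w,k)*(y,j) = (w@y, k+j).\<close>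
definition lmul :: "mon \<Rightarrow> elt \<Rightarrow> elt" where
  "lmul m f = (\<lambda>(x, j). if take (length (fst m)) x = fst m
                        then f (drop (length (fst m)) x, j - snd m) else 0)"

text \<open>Right multiplication by the monomial (w,k): (y,j)*(w,k) = (y@w, j+k).\<close>
definition rmul :: "mon \<Rightarrow> elt \<Rightarrow> elt" where
  "rmul m f = (\<lambda>(x, j). if length (fst m) \<le> length x \<and>
                           drop (length x - length (fst m)) x = fst m
                        then f (take (length x - length (fst m)) x, j - snd m) else 0)"

text \<open>Defining relations of Br(G2): a pair (m1, m2) stands for the relation m1 = m2.\<close>
definition br_rels :: "(mon \<times> mon) list" where
  "br_rels = [
     (([R0,R0],0), ([],0)),
     (([R1,R1],0), ([],0)),
     (([R0,E0],0), ([E0],0)),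
     (([E0,R0],0), ([E0],0)),
     (([R1,E1],0), ([E1],0)),
     (([E1,R1],0), ([E1],0)),
     (([E0,E0],0), ([E0],3)),
     (([E1,E1],0), ([E1],1)),
     (([R0,E1,E0],0), ([R1,E0],0)),
     (([E0,E1,R0],0), ([E0,R1],0)),
     (([E1,R0,E1,R0,E1],0), ([E1],0)),
     (([E1,R0,E1,R0,R1],0), ([E1,R0,R1,R0],0)),
     (([E0,R1,E0],0), ([E0],2)),
     (([R1,R0,E1,R0,E1],0), ([R0,R1,R0,E1],0)),
     ((concat (replicate 6 [R1,R0]),0), ([],0))
   ]"

text \<open>Closure under addition, negation and left/right multiplication by monomials
(including the pure scalars delta^k) gives closure under multiplication by arbitrary
algebra elements on both sides.\<close>
inductive_set br_ideal :: "elt set" where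
  rel: "(m1, m2) \<in> set br_rels \<Longrightarrow> (\<lambda>x. mono m1 x - mono m2 x) \<in> br_ideal"
| zero: "(\<lambda>x. 0) \<in> br_ideal"
| add: "f \<in> br_ideal \<Longrightarrow> g \<in> br_ideal \<Longrightarrow> (\<lambda>x. f x + g x) \<in> br_ideal"
| neg: "f \<in> br_ideal \<Longrightarrow> (\<lambda>x. - f x) \<in> br_ideal"
| left: "f \<in> br_ideal \<Longrightarrow> lmul m f \<in> br_ideal"
| right: "f \<in> br_ideal \<Longrightarrow> rmul m f \<in> br_ideal"

definition br_eq :: "gen list \<Rightarrow> gen list \<Rightarrow> bool" where
  "br_eq u v \<longleftrightarrow> (\<lambda>x. mono (u, 0) x - mono (v, 0) x) \<in> br_ideal"

text \<open>Vectors a*beta0 + b*beta1 are written as pairs (a,b).\<close>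
type_synonym vec = "int \<times> int"

definition beta :: "nat \<Rightarrow> vec" where
  "beta i = (if i = 0 then (1, 0) else (0, 1))"

definition pos_roots :: "vec set" where
  "pos_roots = {(1,0), (0,1), (1,1), (2,1), (3,1), (3,2)}"

text \<open>Simple reflections: s0 beta0 = -beta0, s0 beta1 = beta1 + 3 beta0;
      s1 beta0 = beta0 + beta1, s1 beta1 = -beta1.\<close>
definition srefl :: "nat \<Rightarrow> vec \<Rightarrow> vec" where
  "srefl i = (if i = 0 then (\<lambda>(a, b). (- a + 3 * b, b)) else (\<lambda>(a, b). (a, a - b)))"

fun wmap :: "nat list \<Rightarrow> vec \<Rightarrow> vec" where
  "wmap [] = id"
| "wmap (j # u) = srefl j \<circ> wmap u"

definition words01 :: "nat list set" where
  "words01 = {u. set u \<subseteq> {0, 1}}"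

definition WG2 :: "(vec \<Rightarrow> vec) set" where
  "WG2 = wmap ` words01"

definition act :: "(vec \<Rightarrow> vec) \<Rightarrow> vec \<Rightarrow> vec" where
  "act w b = (if w b \<in> pos_roots then w b else (- fst (w b), - snd (w b)))"

definition stab :: "nat \<Rightarrow> (vec \<Rightarrow> vec) set" where
  "stab i = {w \<in> WG2. act w (beta i) = beta i}"

definition left_coset_reps :: "(vec \<Rightarrow> vec) set \<Rightarrow> (vec \<Rightarrow> vec) set \<Rightarrow> bool" where
  "left_coset_reps D N \<longleftrightarrow> D \<subseteq> WG2 \<and>
     (\<forall>w\<in>WG2. \<exists>!d. d \<in> D \<and> d \<in> (\<lambda>n. w \<circ> n) ` N)"

inductive_set gen_subgroup :: "(vec \<Rightarrow> vec) \<Rightarrow> (vec \<Rightarrow> vec) set" for g where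
  one: "id \<in> gen_subgroup g"
| gen: "g \<in> gen_subgroup g"
| comp: "x \<in> gen_subgroup g \<Longrightarrow> y \<in> gen_subgroup g \<Longrightarrow> x \<circ> y \<in> gen_subgroup g"
| inverse: "x \<in> gen_subgroup g \<Longrightarrow> inv x \<in> gen_subgroup g"

definition Ksub :: "nat \<Rightarrow> (vec \<Rightarrow> vec) set" where
  "Ksub i = (if i = 0 then {id} else gen_subgroup (wmap [0,1,0,1,0]))"

text \<open>The image of w in Br(G2): r_j1 ... r_jn for a word representing w
(well defined since r_i -> s_i is an isomorphism onto W(G2)).\<close>
definition rword :: "nat list \<Rightarrow> gen list" where
  "rword u = map (\<lambda>j. if j = 0 then R0 else R1) u"

definition img :: "(vec \<Rightarrow> vec) \<Rightarrow> gen list" where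
  "img w = rword (SOME u. u \<in> words01 \<and> wmap u = w)"

definition egen :: "nat \<Rightarrow> gen" where
  "egen i = (if i = 0 then E0 else E1)"

end

theory Submission
  imports Defs
begin


lemma br_refl: "br_eq u u"
proof -
  have "(\<lambda>x. mono (u, 0) x - mono (u, 0) x) = (\<lambda>x. 0)" by simp
  then show ?thesis unfolding br_eq_def using br_ideal.zero by simp
qed

lemma br_sym: "br_eq u v \<Longrightarrow> br_eq v u"
  unfolding br_eq_def
proof -
  assume "(\<lambda>x. mono (u, 0) x - mono (v, 0) x) \<in> br_ideal"
  from br_ideal.neg[OF this] show "(\<lambda>x. mono (v, 0) x - mono (u, 0) x) \<in> br_ideal" by simp
qed

lemma br_trans: "br_eq u v \<Longrightarrow> br_eq v w \<Longrightarrow> br_eq u w"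
  unfolding br_eq_def
proof -
  assume a: "(\<lambda>x. mono (u, 0) x - mono (v, 0) x) \<in> br_ideal"
    and b: "(\<lambda>x. mono (v, 0) x - mono (w, 0) x) \<in> br_ideal"
  from br_ideal.add[OF a b] show "(\<lambda>x. mono (u, 0) x - mono (w, 0) x) \<in> br_ideal" by simp
qed

lemma lmul_eq: "lmul (w,0) (\<lambda>x. mono (u, 0) x - mono (v, 0) x) = (\<lambda>x. mono (w@u, 0) x - mono (w@v, 0) x)"
proof (rule ext, clarify)
  fix y :: "gen list" and j :: int
  have k: "\<And>u. (y = w @ u) = (take (length w) y = w \<and> drop (length w) y = u)"
    by (metis append_eq_conv_conj)
  show "lmul (w, 0) (\<lambda>x. mono (u, 0) x - mono (v, 0) x) (y, j) = mono (w @ u, 0) (y, j) - mono (w @ v, 0) (y, j)"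
    unfolding lmul_def mono_def using k[of u] k[of v] by auto
qed

lemma rmul_eq: "rmul (w,0) (\<lambda>x. mono (u, 0) x - mono (v, 0) x) = (\<lambda>x. mono (u@w, 0) x - mono (v@w, 0) x)"
proof (rule ext, clarify)
  fix y :: "gen list" and j :: int
  show "rmul (w, 0) (\<lambda>x. mono (u, 0) x - mono (v, 0) x) (y, j) = mono (u @ w, 0) (y, j) - mono (v @ w, 0) (y, j)"
  proof (cases "length w \<le> length y \<and> drop (length y - length w) y = w")
    case True
    define t where "t = take (length y - length w) y"
    have y: "y = t @ w" unfolding t_def by (metis append_take_drop_id True)
    show ?thesis by (simp add: rmul_def mono_def y)
  next
    case False
    have "\<And>z. y \<noteq> z @ w" using False by auto
    then show ?thesis using False by (simp add: rmul_def mono_def)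
  qed
qed

lemma br_left: "br_eq u v \<Longrightarrow> br_eq (w@u) (w@v)"
  unfolding br_eq_def by (drule br_ideal.left[where m="(w,0)"]) (simp only: lmul_eq)

lemma br_right: "br_eq u v \<Longrightarrow> br_eq (u@w) (v@w)"
  unfolding br_eq_def by (drule br_ideal.right[where m="(w,0)"]) (simp only: rmul_eq)

lemma ctx: "br_eq l r \<Longrightarrow> br_eq (p @ l @ s) (p @ r @ s)"
  by (intro br_left br_right)

lemma rel0: "((l,0),(r,0)) \<in> set br_rels \<Longrightarrow> br_eq l r"
  unfolding br_eq_def by (rule br_ideal.rel)

lemma rAA: "br_eq [R0,R0] []" by (rule rel0) (simp add: br_rels_def)
lemma rBB: "br_eq [R1,R1] []" by (rule rel0) (simp add: br_rels_def)
lemma rAE: "br_eq [R0,E0] [E0]" by (rule rel0) (simp add: br_rels_def)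
lemma rBF: "br_eq [R1,E1] [E1]" by (rule rel0) (simp add: br_rels_def)
lemma rAFE: "br_eq [R0,E1,E0] [R1,E0]" by (rule rel0) (simp add: br_rels_def)
lemma rFaFab: "br_eq [E1,R0,E1,R0,R1] [E1,R0,R1,R0]" by (rule rel0) (simp add: br_rels_def)
lemma rbaFaF: "br_eq [R1,R0,E1,R0,E1] [R0,R1,R0,E1]" by (rule rel0) (simp add: br_rels_def)
lemma rBA6: "br_eq [R1,R0,R1,R0,R1,R0,R1,R0,R1,R0,R1,R0] []"
  by (rule rel0) (simp add: br_rels_def numeral_eq_Suc)



lemma rword_Cons: "rword (j # w) = (if j = 0 then R0 else R1) # rword w"
  by (simp add: rword_def)
lemma rword_append: "rword (u @ v) = rword u @ rword v"
  by (simp add: rword_def)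

lemma C1: "(j = 0 \<longleftrightarrow> k = 0) \<Longrightarrow> br_eq (rword (j # k # w)) (rword w)"
  using ctx[OF rAA, of "[]" "rword w"] ctx[OF rBB, of "[]" "rword w"]
  by (auto simp: rword_Cons)

lemma XY: "br_eq [R1,R0,R1,R0,R1,R0] [R0,R1,R0,R1,R0,R1]"
proof -
  let ?X = "[R1,R0,R1,R0,R1,R0]" and ?Y = "[R0,R1,R0,R1,R0,R1]"
  have YX: "br_eq (?Y @ ?X) []"
  proof -
    have s: "\<And>p q. br_eq (p @ [R0,R0] @ q) (p @ q)" "\<And>p q. br_eq (p @ [R1,R1] @ q) (p @ q)"
      using ctx[OF rAA] ctx[OF rBB] by auto
    have "br_eq (?Y @ ?X) [R0,R1,R0,R1,R0,R0,R1,R0,R1,R0]" using s(2)[of "[R0,R1,R0,R1,R0]" "[R0,R1,R0,R1,R0]"] by simp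
    also have "br_eq \<dots> [R0,R1,R0,R1,R1,R0,R1,R0]" using s(1)[of "[R0,R1,R0,R1]" "[R1,R0,R1,R0]"] by simp
    note t = br_trans[OF calculation this]
    have "br_eq [R0,R1,R0,R1,R1,R0,R1,R0] [R0,R1,R0,R0,R1,R0]" using s(2)[of "[R0,R1,R0]" "[R0,R1,R0]"] by simp
    note t = br_trans[OF t this]
    have "br_eq [R0,R1,R0,R0,R1,R0] [R0,R1,R1,R0]" using s(1)[of "[R0,R1]" "[R1,R0]"] by simp
    note t = br_trans[OF t this]
    have "br_eq [R0,R1,R1,R0] [R0,R0]" using s(2)[of "[R0]" "[R0]"] by simp
    note t = br_trans[OF t this]
    show ?thesis using br_trans[OF t rAA] .
  qed
  have XX: "br_eq (?X @ ?X) []" using rBA6 by simp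
  have "br_eq (?Y @ ?X @ ?X) ?Y" using ctx[OF XX, of ?Y "[]"] by simp
  moreover have "br_eq (?Y @ ?X @ ?X) ?X" using ctx[OF YX, of "[]" ?X] by simp
  ultimately show ?thesis by (meson br_sym br_trans)
qed

lemma C2: "br_eq (rword [1,0,1,0,1,0]) (rword [0,1,0,1,0,1])"
  using XY by (simp add: rword_def)

lemma C3: "br_eq (rword [1,0,1,0,1,0,1]) (rword [0,1,0,1,0])"
proof -
  have "br_eq (rword [1,0,1,0,1,0,1]) (rword [0,1,0,1,0,1,1])"
    using ctx[OF XY, of "[]" "[R1]"] by (simp add: rword_def)
  moreover have "br_eq (rword [0,1,0,1,0,1,1]) (rword [0,1,0,1,0])"
    using ctx[OF rBB, of "[R0,R1,R0,R1,R0]" "[]"] by (simp add: rword_def)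
  ultimately show ?thesis by (rule br_trans)
qed

definition red :: "nat \<Rightarrow> nat list \<Rightarrow> nat list" where
  "red j w = (let j' = (if j = 0 then 0 else 1) in
     if w \<noteq> [] \<and> hd w = j' then tl w
     else if j' # w = [1,0,1,0,1,0] then [0,1,0,1,0,1]
     else if j' # w = [1,0,1,0,1,0,1] then [0,1,0,1,0]
     else j' # w)"

fun nf :: "nat list \<Rightarrow> nat list" where
  "nf [] = []"
| "nf (j # u) = red j (nf u)"

lemma rword_norm: "rword (j # w) = rword ((if j = 0 then 0 else 1) # w)"
  by (simp add: rword_def)

lemma C: "br_eq (rword (j # w)) (rword (red j w))"
proof -
  define j' where "j' = (if j = 0 then (0::nat) else 1)"
  have n: "rword (j # w) = rword (j' # w)" unfolding j'_def by (rule rword_norm)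
  show ?thesis
  proof (cases "w \<noteq> [] \<and> hd w = j'")
    case True
    then obtain w' where w: "w = j' # w'" by (cases w) auto
    have "red j w = w'" using True w unfolding red_def j'_def by (simp add: Let_def)
    then show ?thesis using C1[of j j' w'] w unfolding j'_def by auto
  next
    case F: False
    show ?thesis
    proof (cases "j' # w = [1,0,1,0,1,0]")
      case True
      then have "red j w = [0,1,0,1,0,1]" using F unfolding red_def j'_def by (simp add: Let_def)
      then show ?thesis using C2 n True by simp
    next
      case F2: False
      show ?thesis
      proof (cases "j' # w = [1,0,1,0,1,0,1]")
        case True
        then have "red j w = [0,1,0,1,0]" using F F2 unfolding red_def j'_def by (simp add: Let_def)
        then show ?thesis using C3 n True by simp
      next
        case False
        then have "red j w = j' # w" using F F2 unfolding red_def j'_def by (cases "j = 0") (auto simp: Let_def)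
        then show ?thesis using n br_refl by simp
      qed
    qed
  qed
qed

lemma nf_br: "br_eq (rword u) (rword (nf u))"
proof (induction u)
  case Nil then show ?case by (simp add: br_refl)
next
  case (Cons j u)
  have "br_eq (rword (j # u)) (rword (j # nf u))"
    using br_left[OF Cons, of "rword [j]"] by (simp add: rword_def)
  then show ?case using C br_trans by auto
qed

definition canonL :: "nat list list" where
  "canonL = [[], [0], [1], [0,1], [1,0], [0,1,0], [1,0,1], [0,1,0,1], [1,0,1,0],
             [0,1,0,1,0], [1,0,1,0,1], [0,1,0,1,0,1]]"

lemma red_canon_all: "\<forall>w\<in>set canonL. red 0 w \<in> set canonL \<and> red 1 w \<in> set canonL"
  by (simp add: canonL_def red_def Let_def)

lemma red_norm: "red j w = red (if j = 0 then 0 else 1) w"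
  unfolding red_def by simp

lemma red_canon: "w \<in> set canonL \<Longrightarrow> red j w \<in> set canonL"
  using red_canon_all red_norm[of j w] by (cases "j = 0") auto

lemma nf_canon: "nf u \<in> set canonL"
  by (induction u) (auto simp: red_canon, simp add: canonL_def)

lemma wmap_append: "wmap (u @ v) = wmap u \<circ> wmap v"
  by (induction u) auto

lemma srefl_norm: "srefl j = srefl (if j = 0 then 0 else 1)"
  by (simp add: srefl_def)

lemma wmap_lin: "wmap u (a,b) = (a * fst (wmap u (1,0)) + b * fst (wmap u (0,1)),
                                  a * snd (wmap u (1,0)) + b * snd (wmap u (0,1)))"
proof (induction u arbitrary: a b)
  case Nil then show ?case by simp
next
  case (Cons j u)
  obtain p1 q1 where e1: "wmap u (1,0) = (p1,q1)" by fastforce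
  obtain p2 q2 where e2: "wmap u (0,1) = (p2,q2)" by fastforce
  have "wmap u (a,b) = (a*p1+b*p2, a*q1+b*q2)" using Cons[of a b] e1 e2 by simp
  then show ?case by (simp add: e1 e2 srefl_def algebra_simps)
qed

lemma wmap_ext: "wmap u (1,0) = wmap v (1,0) \<Longrightarrow> wmap u (0,1) = wmap v (0,1) \<Longrightarrow> wmap u = wmap v"
  by (rule ext, clarify, subst wmap_lin, subst (2) wmap_lin) simp

lemma red_basis_all: "\<forall>w\<in>set canonL. \<forall>j'\<in>{0,1::nat}.
   wmap (red j' w) (1,0) = wmap (j'#w) (1,0) \<and> wmap (red j' w) (0,1) = wmap (j'#w) (0,1)"
  by (simp add: canonL_def red_def Let_def srefl_def)

lemma red_basis: "w \<in> set canonL \<Longrightarrow> j' \<in> {0,1} \<Longrightarrow>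
   wmap (red j' w) (1,0) = wmap (j'#w) (1,0) \<and> wmap (red j' w) (0,1) = wmap (j'#w) (0,1)"
  using red_basis_all by blast

lemma wmap_red: "w \<in> set canonL \<Longrightarrow> wmap (red j w) = wmap (j # w)"
proof -
  assume w: "w \<in> set canonL"
  define j' where "j' = (if j = 0 then (0::nat) else 1)"
  have "j' \<in> {0,1}" unfolding j'_def by simp
  note b = red_basis[OF w this]
  have "wmap (red j' w) = wmap (j' # w)"
    by (rule wmap_ext[OF conjunct1[OF b] conjunct2[OF b]])
  then show ?thesis using srefl_norm[of j] red_norm[of j w] unfolding j'_def by simp
qed

lemma nf_wmap: "wmap (nf u) = wmap u"
proof (induction u)
  case Nil then show ?case by simp
next
  case (Cons j u)
  have "wmap (nf (j # u)) = wmap (j # nf u)" using wmap_red[OF nf_canon[of u], of j] by simp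
  also have "\<dots> = wmap (j # u)" using Cons by simp
  finally show ?case .
qed

definition sig :: "nat list \<Rightarrow> vec \<times> vec" where
  "sig u = (wmap u (1,0), wmap u (0,1))"

lemma sig_distinct: "distinct (map sig canonL)"
  by (simp add: canonL_def sig_def srefl_def)

lemma canon_inj: "u \<in> set canonL \<Longrightarrow> v \<in> set canonL \<Longrightarrow> wmap u = wmap v \<Longrightarrow> u = v"
proof -
  assume u: "u \<in> set canonL" and v: "v \<in> set canonL" and e: "wmap u = wmap v"
  have i: "inj_on sig (set canonL)" using sig_distinct by (simp add: distinct_map)
  have "sig u = sig v" using e by (simp add: sig_def)
  then show "u = v" using inj_onD[OF i _ u v] by simp
qed

lemma welldef: "wmap u = wmap v \<Longrightarrow> br_eq (rword u) (rword v)"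
proof -
  assume h: "wmap u = wmap v"
  have "wmap (nf u) = wmap (nf v)" using h by (simp only: nf_wmap)
  then have "nf u = nf v" by (rule canon_inj[OF nf_canon nf_canon])
  then have "br_eq (rword (nf u)) (rword v)" using br_sym[OF nf_br[of v]] by simp
  then show ?thesis using br_trans[OF nf_br[of u]] by simp
qed



lemma K0b: "br_eq [R1,R0,R1,R0,R1,E0] [E0]"
proof -
  have 1: "br_eq [R1,R0,R1,R0,R1,E0] [R1,R0,R1,R0,R0,E1,E0]" using ctx[OF br_sym[OF rAFE], of "[R1,R0,R1,R0]" "[]"] by simp
  have 2: "br_eq [R1,R0,R1,R0,R0,E1,E0] [R1,R0,R1,E1,E0]" using ctx[OF rAA, of "[R1,R0,R1]" "[E1,E0]"] by simp
  have 3: "br_eq [R1,R0,R1,E1,E0] [R1,R0,E1,E0]" using ctx[OF rBF, of "[R1,R0]" "[E0]"] by simp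
  have 4: "br_eq [R1,R0,E1,E0] [R1,R1,E0]" using ctx[OF rAFE, of "[R1]" "[]"] by simp
  have 5: "br_eq [R1,R1,E0] [E0]" using ctx[OF rBB, of "[]" "[E0]"] by simp
  show ?thesis using br_trans[OF br_trans[OF br_trans[OF br_trans[OF 1 2] 3] 4] 5] .
qed

lemma K0c: "br_eq [R0,R1,R0,R1,R0,R1,E0] [E0]"
proof -
  have "br_eq [R0,R1,R0,R1,R0,R1,E0] [R0,E0]" using ctx[OF K0b, of "[R0]" "[]"] by simp
  then show ?thesis using br_trans rAE by blast
qed

lemma cF: "br_eq [R0,R1,R0,R1,R0,E1] [E1,R0,E1]"
proof -
  have 1: "br_eq [R0,R1,R0,R1,R0,E1] [R0,R1,R1,R0,E1,R0,E1]" using ctx[OF br_sym[OF rbaFaF], of "[R0,R1]" "[]"] by simp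
  have 2: "br_eq [R0,R1,R1,R0,E1,R0,E1] [R0,R0,E1,R0,E1]" using ctx[OF rBB, of "[R0]" "[R0,E1,R0,E1]"] by simp
  have 3: "br_eq [R0,R0,E1,R0,E1] [E1,R0,E1]" using ctx[OF rAA, of "[]" "[E1,R0,E1]"] by simp
  show ?thesis using br_trans[OF br_trans[OF 1 2] 3] .
qed

lemma Fc: "br_eq [E1,R0,R1,R0,R1,R0] [E1,R0,E1]"
proof -
  have 1: "br_eq [E1,R0,R1,R0,R1,R0] [E1,R0,E1,R0,R1,R1,R0]" using ctx[OF br_sym[OF rFaFab], of "[]" "[R1,R0]"] by simp
  have 2: "br_eq [E1,R0,E1,R0,R1,R1,R0] [E1,R0,E1,R0,R0]" using ctx[OF rBB, of "[E1,R0,E1,R0]" "[R0]"] by simp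
  have 3: "br_eq [E1,R0,E1,R0,R0] [E1,R0,E1]" using ctx[OF rAA, of "[E1,R0,E1]" "[]"] by simp
  show ?thesis using br_trans[OF br_trans[OF 1 2] 3] .
qed

lemma cc: "br_eq [R0,R1,R0,R1,R0,R0,R1,R0,R1,R0] []"
proof -
  have 1: "br_eq [R0,R1,R0,R1,R0,R0,R1,R0,R1,R0] [R0,R1,R0,R1,R1,R0,R1,R0]" using ctx[OF rAA, of "[R0,R1,R0,R1]" "[R1,R0,R1,R0]"] by simp
  have 2: "br_eq [R0,R1,R0,R1,R1,R0,R1,R0] [R0,R1,R0,R0,R1,R0]" using ctx[OF rBB, of "[R0,R1,R0]" "[R0,R1,R0]"] by simp
  have 3: "br_eq [R0,R1,R0,R0,R1,R0] [R0,R1,R1,R0]" using ctx[OF rAA, of "[R0,R1]" "[R1,R0]"] by simp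
  have 4: "br_eq [R0,R1,R1,R0] [R0,R0]" using ctx[OF rBB, of "[R0]" "[R0]"] by simp
  show ?thesis using br_trans[OF br_trans[OF br_trans[OF br_trans[OF 1 2] 3] 4] rAA] .
qed

lemma K1b: "br_eq [R0,R1,R0,R1,R0,E1,R0,R1,R0,R1,R0] [E1]"
proof -
  have 1: "br_eq [R0,R1,R0,R1,R0,E1,R0,R1,R0,R1,R0] [E1,R0,R1,R0,R1,R0,R0,R1,R0,R1,R0]"
    using br_trans[OF br_right[OF cF] br_sym[OF br_right[OF Fc]], of "[R0,R1,R0,R1,R0]"] by simp
  have 2: "br_eq [E1,R0,R1,R0,R1,R0,R0,R1,R0,R1,R0] [E1]" using br_left[OF cc, of "[E1]"] by simp
  show ?thesis using br_trans[OF 1 2] .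
qed

lemma K1c: "br_eq [R0,R1,R0,R1,R0,R1,E1,R0,R1,R0,R1,R0] [E1]"
proof -
  have "br_eq [R0,R1,R0,R1,R0,R1,E1,R0,R1,R0,R1,R0] [R0,R1,R0,R1,R0,E1,R0,R1,R0,R1,R0]"
    using ctx[OF rBF, of "[R0,R1,R0,R1,R0]" "[R0,R1,R0,R1,R0]"] by simp
  then show ?thesis using br_trans K1b by blast
qed

lemma stab_list0: "\<forall>v\<in>set canonL. act (wmap v) (beta 0) = beta 0 \<longrightarrow> v \<in> set [[], [0], [1,0,1,0,1], [0,1,0,1,0,1]]"
  by (simp add: canonL_def act_def beta_def srefl_def pos_roots_def)

lemma stab_list1: "\<forall>v\<in>set canonL. act (wmap v) (beta 1) = beta 1 \<longrightarrow> v \<in> set [[], [1], [0,1,0,1,0], [0,1,0,1,0,1]]"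
  by (simp add: canonL_def act_def beta_def srefl_def pos_roots_def)

lemma key:
  assumes v: "v \<in> set canonL" and i: "i \<in> {0::nat,1}" and st: "act (wmap v) (beta i) = beta i"
  shows "\<exists>bw. bw \<in> words01 \<and> wmap bw \<in> Ksub i \<and> br_eq (rword v @ [egen i] @ rword bw) [egen i]"
proof (cases "i = 0")
  case True
  have w0: "[] \<in> words01" "wmap [] \<in> Ksub i" using True by (auto simp: words01_def Ksub_def)
  have "v \<in> set [[], [0], [1,0,1,0,1], [0,1,0,1,0,1]]" using stab_list0 v st True by blast
  then have "br_eq (rword v @ [egen i] @ rword []) [egen i]"
    using True rAE K0b K0c br_refl by (auto simp: rword_def egen_def)
  then show ?thesis using w0 by blast
next
  case False
  then have i1: "i = 1" using i by auto
  have w0: "[] \<in> words01" "wmap [] \<in> Ksub i" using i1 by (auto simp: words01_def Ksub_def intro: gen_subgroup.one)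
  have w1: "[0,1,0,1,0] \<in> words01" "wmap [0,1,0,1,0] \<in> Ksub i" using i1 by (auto simp: words01_def Ksub_def intro: gen_subgroup.gen)
  have "v \<in> set [[], [1], [0,1,0,1,0], [0,1,0,1,0,1]]" using stab_list1 v st i1 by blast
  then consider "v = []" | "v = [1]" | "v = [0,1,0,1,0]" | "v = [0,1,0,1,0,1]" by auto
  then show ?thesis
  proof cases
    case 1
    then have "br_eq (rword v @ [egen i] @ rword []) [egen i]" using br_refl by (simp add: rword_def)
    then show ?thesis using w0 by blast
  next
    case 2
    then have "br_eq (rword v @ [egen i] @ rword []) [egen i]" using rBF i1 by (simp add: rword_def egen_def)
    then show ?thesis using w0 by blast
  next
    case 3
    then have "br_eq (rword v @ [egen i] @ rword [0,1,0,1,0]) [egen i]" using K1b i1 by (simp add: rword_def egen_def)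
    then show ?thesis using w1 by blast
  next
    case 4
    then have "br_eq (rword v @ [egen i] @ rword [0,1,0,1,0]) [egen i]" using K1c i1 by (simp add: rword_def egen_def)
    then show ?thesis using w1 by blast
  qed
qed

lemma img_word: "u \<in> words01 \<Longrightarrow> br_eq (img (wmap u)) (rword u)"
proof -
  assume u: "u \<in> words01"
  have "\<exists>v. v \<in> words01 \<and> wmap v = wmap u" using u by blast
  then have "(SOME v. v \<in> words01 \<and> wmap v = wmap u) \<in> words01 \<and> wmap (SOME v. v \<in> words01 \<and> wmap v = wmap u) = wmap u"
    by (rule someI_ex)
  then show ?thesis unfolding img_def using welldef by blast
qed

lemma canon_words: "v \<in> set canonL \<Longrightarrow> v \<in> words01"
  by (auto simp: canonL_def words01_def)

theorem lemma9p5: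
  fixes D :: "nat \<Rightarrow> (vec \<Rightarrow> vec) set"
  assumes "\<forall>i\<in>{0::nat, 1}. left_coset_reps (D i) (stab i)"
  shows "\<forall>r\<in>WG2. \<forall>i\<in>{0::nat, 1}. \<exists>a\<in>D i. \<exists>b\<in>Ksub i.
           br_eq (img r @ [egen i]) (img a @ [egen i] @ img b)"
proof (intro ballI)
  fix r i
  assume r: "r \<in> WG2" and i: "i \<in> {0::nat, 1}"
  have lc: "left_coset_reps (D i) (stab i)" using assms i by blast
  then have "\<exists>!d. d \<in> D i \<and> d \<in> (\<lambda>n. r \<circ> n) ` stab i" using r unfolding left_coset_reps_def by blast
  then obtain a n where aD: "a \<in> D i" and n: "n \<in> stab i" and an: "a = r \<circ> n" by blast
  obtain u where u: "u \<in> words01" and ru: "r = wmap u" using r unfolding WG2_def by blast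
  from n have nW: "n \<in> WG2" and nst: "act n (beta i) = beta i" unfolding stab_def by auto
  obtain v where v: "v \<in> words01" and nv: "n = wmap v" using nW unfolding WG2_def by blast
  define v' where "v' = nf v"
  have v'c: "v' \<in> set canonL" unfolding v'_def by (rule nf_canon)
  have nv': "n = wmap v'" unfolding v'_def using nv nf_wmap by simp
  obtain bw where bw: "bw \<in> words01" "wmap bw \<in> Ksub i" and kb: "br_eq (rword v' @ [egen i] @ rword bw) [egen i]"
    using key[OF v'c i] nst nv' by blast
  have uv: "u @ v' \<in> words01" using u canon_words[OF v'c] by (simp add: words01_def)
  have aw: "a = wmap (u @ v')" using an ru nv' by (simp add: wmap_append)
  have ia: "br_eq (img a) (rword u @ rword v')" using img_word[OF uv] aw by (simp add: rword_append)
  have ib: "br_eq (img (wmap bw)) (rword bw)" using img_word[OF bw(1)] .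
  have ir: "br_eq (img r) (rword u)" using img_word[OF u] ru by simp
  let ?e = "[egen i]"
  have s1: "br_eq (img a @ ?e @ img (wmap bw)) ((rword u @ rword v') @ ?e @ img (wmap bw))"
    using br_right[OF ia] .
  have s2: "br_eq ((rword u @ rword v') @ ?e @ img (wmap bw)) ((rword u @ rword v') @ ?e @ rword bw)"
    using br_left[OF ib, of "(rword u @ rword v') @ ?e"] by simp
  have s3: "br_eq ((rword u @ rword v') @ ?e @ rword bw) (rword u @ ?e)"
    using br_left[OF kb, of "rword u"] by simp
  have s4: "br_eq (rword u @ ?e) (img r @ ?e)" using br_right[OF br_sym[OF ir]] .
  have "br_eq (img a @ ?e @ img (wmap bw)) (img r @ ?e)"
    using br_trans[OF br_trans[OF br_trans[OF s1 s2] s3] s4] .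
  then have "br_eq (img r @ ?e) (img a @ ?e @ img (wmap bw))" by (rule br_sym)
  then show "\<exists>a\<in>D i. \<exists>b\<in>Ksub i. br_eq (img r @ [egen i]) (img a @ [egen i] @ img b)"
    using aD bw(2) by blast
qed

end
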